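(* Let $A$ be a binary ($\{0,1\}$-valued) $n\times m$ matrix, let $R$ be either the binary rank $R_{binary}$ or the boolean rank $R_{bool}$, and let $k=R(A)$. Bases and spanning below are taken in the binary sense if $R=R_{binary}$ and in the boolean sense if $R=R_{bool}$. (1) If $A$ has a base that spans all other bases of $A$, then for every set of binary column vectors $x_1,\dots,x_t$ of length $n$ with $R(A|x_i)=k$ for all $1\le i\le t$, it also holds that $R(A|x_1,\dots,x_t)=k$. (2) If there is no base of $A$ that spans all other bases of $A$, then there exist binary column vectors $x_1,\dots,x_t$ of length $n$ such that $R(A|x_i)=k$ for all $1\le i\le t$, but $R(A|x_1,\dots,x_t)>k$. In particular, $A$ has the Augmentation property for $R$ if and only if $A$ has a base that spans all other bases of $A$.
   Context: Binary rank: for a binary $n\times m$ matrix $A$, $R_{binary}(A)$ is the least $k$ such that $A=UV$ with $U\in\{0,1\}^{n\times k}$, $V\in\{0,1\}^{k\times m}$, the product computed with ordinary real arithmetic. Boolean rank $R_{bool}(A)$: the same, except that the product is computed in the Boolean semiring ($1+1=1$, i.e. entrywise OR of ANDs). A set $X$ of $\{0,1\}$-vectors spans a vector $y$ in the binary sense if $y=\sum_{x\in X}c_x x$ for some coefficients $c_x\in\{0,1\}$ with ordinary addition, and in the boolean sense if the same holds with boolean addition ($1+1=1$). $X$ spans a set $Y$ if it spans every vector of $Y$. A base of $A$ (binary, resp. boolean) is a set of $\{0,1\}$ column vectors of length $n$ that spans all columns of $A$ and is a minimal spanning set, i.e. has minimum cardinality among such spanning sets. $(A|x_1,\dots,x_t)$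 denotes $A$ augmented with the columns $x_1,\dots,x_t$ appended on the right. A matrix $A$ has the Augmentation property for a rank function $R$ if for every collection of column vectors $x_1,\dots,x_t$ with $R(A|x_i)=R(A)$ for all $i$, also $R(A|x_1,\dots,x_t)=R(A)$. *)

theory Defs
  imports Main
begin

text \<open>A binary column vector of length n is a bool list of length n (True = 1).
An n x m binary matrix is represented as the list of its m columns, each of length n.\<close>

datatype rank_mode = Binary | Boolean

definition vecs :: "nat \<Rightarrow> bool list set" where
  "vecs n = {v. length v = n}"

definition is_matrix :: "nat \<Rightarrow> bool list list \<Rightarrow> bool" where
  "is_matrix n A \<longleftrightarrow> (\<forall>c\<in>set A. length c = n)"

definition factors :: "rank_mode \<Rightarrow> nat \<Rightarrow> bool list list \<Rightarrow> nat \<Rightarrow> bool" where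
  "factors R n A k \<longleftrightarrow> (\<exists>(U::nat \<Rightarrow> nat \<Rightarrow> bool) (V::nat \<Rightarrow> nat \<Rightarrow> bool).
     \<forall>i<n. \<forall>j<length A.
       (case R of
          Binary \<Rightarrow> (of_bool (A ! j ! i) :: nat) = (\<Sum>l<k. of_bool (U i l) * of_bool (V l j))
        | Boolean \<Rightarrow> (A ! j ! i) = (\<exists>l<k. U i l \<and> V l j)))"

definition rank :: "rank_mode \<Rightarrow> nat \<Rightarrow> bool list list \<Rightarrow> nat" where
  "rank R n A = (LEAST k. factors R n A k)"

definition spans_vec :: "rank_mode \<Rightarrow> bool list set \<Rightarrow> bool list \<Rightarrow> bool" where
  "spans_vec R X y \<longleftrightarrow> (\<exists>S\<subseteq>X. \<forall>i<length y.
     (case R of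
        Binary \<Rightarrow> (of_bool (y ! i) :: nat) = (\<Sum>x\<in>S. of_bool (x ! i))
      | Boolean \<Rightarrow> (y ! i) = (\<exists>x\<in>S. x ! i)))"

definition spans :: "rank_mode \<Rightarrow> bool list set \<Rightarrow> bool list set \<Rightarrow> bool" where
  "spans R X Y \<longleftrightarrow> (\<forall>y\<in>Y. spans_vec R X y)"

definition is_base :: "rank_mode \<Rightarrow> nat \<Rightarrow> bool list list \<Rightarrow> bool list set \<Rightarrow> bool" where
  "is_base R n A B \<longleftrightarrow> B \<subseteq> vecs n \<and> spans R B (set A) \<and>
     (\<forall>B'. B' \<subseteq> vecs n \<and> spans R B' (set A) \<longrightarrow> card B \<le> card B')"

definition augmentation_prop :: "rank_mode \<Rightarrow> nat \<Rightarrow> bool list list \<Rightarrow> bool" where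
  "augmentation_prop R n A \<longleftrightarrow> (\<forall>xs. set xs \<subseteq> vecs n \<longrightarrow>
     (\<forall>x\<in>set xs. rank R n (A @ [x]) = rank R n A) \<longrightarrow> rank R n (A @ xs) = rank R n A)"

end

theory Submission
  imports Defs
begin

lemma finite_vecs: "finite (vecs n)"
proof -
  have "vecs n = {xs. set xs \<subseteq> (UNIV::bool set) \<and> length xs = n}" by (auto simp: vecs_def)
  then show ?thesis using finite_lists_length_eq[of "UNIV::bool set" n] by simp
qed

lemma sum_image_01:
  fixes f :: "'b \<Rightarrow> nat"
  assumes "finite L" "(\<Sum>l\<in>L. f (h l)) \<le> 1"
  shows "(\<Sum>x\<in>h`L. f x) = (\<Sum>l\<in>L. f (h l))"
proof -
  have le: "(\<Sum>x\<in>h`L. f x) \<le> (\<Sum>l\<in>L. f (h l))"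
    using sum_image_le[of L f h] assms(1) by (simp add: comp_def)
  show ?thesis
  proof (cases "(\<Sum>l\<in>L. f (h l)) = 0")
    case True with le show ?thesis by simp
  next
    case False
    then obtain l where l: "l\<in>L" "f (h l) \<noteq> 0" by (metis sum.neutral)
    then have "f (h l) \<le> (\<Sum>x\<in>h`L. f x)" by (intro member_le_sum) (auto simp: assms)
    with False assms le l(2) show ?thesis by linarith
  qed
qed

lemma spans_vec_trans:
  assumes X: "X \<subseteq> vecs n" and Y: "Y \<subseteq> vecs n" and XY: "spans R X Y"
    and Yz: "spans_vec R Y z" and lz: "length z = n"
  shows "spans_vec R X z"
proof -
  from Yz obtain S where S: "S \<subseteq> Y" and Sz: "\<forall>i<length z. (case R of
        Binary \<Rightarrow> (of_bool (z ! i) :: nat) = (\<Sum>x\<in>S. of_bool (x ! i))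
      | Boolean \<Rightarrow> (z ! i) = (\<exists>x\<in>S. x ! i))" unfolding spans_vec_def by blast
  from XY have "\<forall>y\<in>Y. \<exists>T. T \<subseteq> X \<and> (\<forall>i<length y. (case R of
        Binary \<Rightarrow> (of_bool (y ! i) :: nat) = (\<Sum>x\<in>T. of_bool (x ! i))
      | Boolean \<Rightarrow> (y ! i) = (\<exists>x\<in>T. x ! i)))" unfolding spans_def spans_vec_def by blast
  then obtain T where T: "\<forall>y\<in>Y. T y \<subseteq> X \<and> (\<forall>i<length y. (case R of
        Binary \<Rightarrow> (of_bool (y ! i) :: nat) = (\<Sum>x\<in>T y. of_bool (x ! i))
      | Boolean \<Rightarrow> (y ! i) = (\<exists>x\<in>T y. x ! i)))" by metis
  let ?P = "Sigma S T"
  have finX: "finite X" using X finite_vecs finite_subset by blast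
  have finY: "finite Y" using Y finite_vecs finite_subset by blast
  have finS: "finite S" using S finY finite_subset by blast
  have finT: "\<forall>y\<in>S. finite (T y)" using T S finX finite_subset by blast
  have finP: "finite ?P" using finS finT by blast
  have sub: "snd ` ?P \<subseteq> X" using T S by fastforce
  have leny: "\<And>y. y \<in> S \<Longrightarrow> length y = n" using S Y by (auto simp: vecs_def)
  show ?thesis unfolding spans_vec_def
  proof (intro exI[of _ "snd ` ?P"] conjI allI impI sub)
    fix i assume i: "i < length z"
    show "case R of Binary \<Rightarrow> (of_bool (z ! i) :: nat) = (\<Sum>x\<in>snd ` ?P. of_bool (x ! i))
      | Boolean \<Rightarrow> (z ! i) = (\<exists>x\<in>snd ` ?P. x ! i)"
    proof (cases R)
      case Binary
      have "(of_bool (z!i) :: nat) = (\<Sum>y\<in>S. of_bool (y!i))" using Sz i Binary by auto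
      also have "... = (\<Sum>y\<in>S. \<Sum>x\<in>T y. of_bool (x!i))"
      proof (rule sum.cong[OF refl])
        fix y assume y: "y \<in> S"
        then have "y \<in> Y" "i < length y" using S leny i lz by auto
        then show "(of_bool (y!i) :: nat) = (\<Sum>x\<in>T y. of_bool (x!i))" using T Binary by force
      qed
      also have "... = (\<Sum>p\<in>?P. of_bool (snd p ! i))"
        using sum.Sigma[OF finS finT, of "\<lambda>y x. (of_bool (x!i) :: nat)"] by (simp add: case_prod_beta)
      finally have eq: "(of_bool (z!i) :: nat) = (\<Sum>p\<in>?P. of_bool (snd p ! i))" .
      then have "(\<Sum>p\<in>?P. (of_bool (snd p ! i) :: nat)) \<le> 1" by (cases "z!i") auto
      from sum_image_01[where f="\<lambda>x. of_bool (x!i)" and h=snd, OF finP this] eq show ?thesis using Binary by simp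
    next
      case Boolean
      have "z!i = (\<exists>y\<in>S. y!i)" using Sz i Boolean by auto
      also have "... = (\<exists>y\<in>S. \<exists>x\<in>T y. x!i)"
      proof (rule bex_cong[OF refl])
        fix y assume y: "y \<in> S"
        then have "y \<in> Y" "i < length y" using S leny i lz by auto
        then show "(y!i) = (\<exists>x\<in>T y. x!i)" using T Boolean by force
      qed
      finally show ?thesis using Boolean by force
    qed
  qed
qed

lemma factors_from_B:
  assumes M: "is_matrix n M" and B: "B \<subseteq> vecs n" and cB: "card B \<le> k" and sp: "spans R B (set M)"
  shows "factors R n M k"
proof -
  have finB: "finite B" using B finite_vecs finite_subset by blast
  obtain h where h: "bij_betw h {0..<card B} B" using ex_bij_betw_nat_finite[OF finB] by blast
  from sp have "\<forall>y\<in>set M. \<exists>S. S \<subseteq> B \<and> (\<forall>i<length y. (case R of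
        Binary \<Rightarrow> (of_bool (y ! i) :: nat) = (\<Sum>x\<in>S. of_bool (x ! i))
      | Boolean \<Rightarrow> (y ! i) = (\<exists>x\<in>S. x ! i)))" unfolding spans_def spans_vec_def by blast
  then obtain Sf where Sf: "\<forall>y\<in>set M. Sf y \<subseteq> B \<and> (\<forall>i<length y. (case R of
        Binary \<Rightarrow> (of_bool (y ! i) :: nat) = (\<Sum>x\<in>Sf y. of_bool (x ! i))
      | Boolean \<Rightarrow> (y ! i) = (\<exists>x\<in>Sf y. x ! i)))" by metis
  define U where "U i l = (l < card B \<and> h l ! i)" for i l
  define V where "V l j = (l < card B \<and> h l \<in> Sf (M ! j))" for l j
  show ?thesis unfolding factors_def
  proof (rule exI[of _ U], rule exI[of _ V], intro allI impI)
    fix i j assume i: "i < n" and j: "j < length M"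
    let ?y = "M ! j"
    have yM: "?y \<in> set M" using j by simp
    have ly: "length ?y = n" using M yM by (auto simp: is_matrix_def)
    have SB: "Sf ?y \<subseteq> B" using Sf yM by blast
    show "case R of Binary \<Rightarrow> (of_bool (M ! j ! i) :: nat) = (\<Sum>l<k. of_bool (U i l) * of_bool (V l j))
        | Boolean \<Rightarrow> (M ! j ! i) = (\<exists>l<k. U i l \<and> V l j)"
    proof (cases R)
      case Binary
      let ?g = "\<lambda>x. if x \<in> Sf ?y then (of_bool (x!i) :: nat) else 0"
      have "(of_bool (?y!i) :: nat) = (\<Sum>x\<in>Sf ?y. of_bool (x ! i))" using Sf yM ly i Binary by auto
      also have "... = (\<Sum>x\<in>B. ?g x)"
        using SB finB by (simp add: sum.If_cases Int_absorb1)
      also have "... = (\<Sum>l\<in>{0..<card B}. ?g (h l))"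
        using sum.reindex_bij_betw[OF h, of ?g] by simp
      also have "... = (\<Sum>l\<in>{..<k}. of_bool (U i l) * of_bool (V l j))"
        by (rule sum.mono_neutral_cong_left) (use cB in \<open>auto simp: U_def V_def\<close>)
      finally show ?thesis using Binary by simp
    next
      case Boolean
      have "(?y!i) = (\<exists>x\<in>Sf ?y. x ! i)" using Sf yM ly i Boolean by auto
      also have "... = (\<exists>l<k. U i l \<and> V l j)"
      proof
        assume "\<exists>x\<in>Sf ?y. x ! i"
        then obtain x where x: "x \<in> Sf ?y" "x ! i" by blast
        then have "x \<in> B" using SB by blast
        then obtain l where "l \<in> {0..<card B}" "h l = x" using h by (metis bij_betw_iff_bijections)
        then show "\<exists>l<k. U i l \<and> V l j" using x cB by (auto simp: U_def V_def intro!: exI[of _ l])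
      next
        assume "\<exists>l<k. U i l \<and> V l j"
        then show "\<exists>x\<in>Sf ?y. x ! i" by (auto simp: U_def V_def)
      qed
      finally show ?thesis using Boolean by simp
    qed
  qed
qed

lemma B_from_factors:
  assumes M: "is_matrix n M" and f: "factors R n M k"
  shows "\<exists>B. B \<subseteq> vecs n \<and> card B \<le> k \<and> spans R B (set M)"
proof -
  from f obtain U V where UV: "\<forall>i<n. \<forall>j<length M.
       (case R of
          Binary \<Rightarrow> (of_bool (M ! j ! i) :: nat) = (\<Sum>l<k. of_bool (U i l) * of_bool (V l j))
        | Boolean \<Rightarrow> (M ! j ! i) = (\<exists>l<k. U i l \<and> V l j))" unfolding factors_def by blast
  define col where "col l = map (\<lambda>i. U i l) [0..<n]" for l
  have colnth: "\<And>l i. i < n \<Longrightarrow> col l ! i = U i l" by (simp add: col_def)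
  show ?thesis
  proof (intro exI[of _ "col ` {..<k}"] conjI)
    show "col ` {..<k} \<subseteq> vecs n" by (auto simp: vecs_def col_def)
    show "card (col ` {..<k}) \<le> k" using card_image_le[of "{..<k}" col] by simp
    show "spans R (col ` {..<k}) (set M)" unfolding spans_def spans_vec_def
    proof
      fix y assume "y \<in> set M"
      then obtain j where j: "j < length M" and yj: "y = M ! j" by (metis in_set_conv_nth)
      have ly: "length y = n" using M \<open>y \<in> set M\<close> by (auto simp: is_matrix_def)
      let ?L = "{l\<in>{..<k}. V l j}"
      show "\<exists>S\<subseteq>col ` {..<k}. \<forall>i<length y. case R of
            Binary \<Rightarrow> (of_bool (y ! i) :: nat) = (\<Sum>x\<in>S. of_bool (x ! i))
          | Boolean \<Rightarrow> (y ! i) = (\<exists>x\<in>S. x ! i)"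
      proof (intro exI[of _ "col ` ?L"] conjI allI impI)
        show "col ` ?L \<subseteq> col ` {..<k}" by blast
        fix i assume i: "i < length y"
        then have i': "i < n" using ly by simp
        have e: "case R of Binary \<Rightarrow> (of_bool (y ! i) :: nat) = (\<Sum>l<k. of_bool (U i l) * of_bool (V l j))
          | Boolean \<Rightarrow> (y ! i) = (\<exists>l<k. U i l \<and> V l j)" using UV i' j yj by blast
        show "case R of Binary \<Rightarrow> (of_bool (y ! i) :: nat) = (\<Sum>x\<in>col ` ?L. of_bool (x ! i))
          | Boolean \<Rightarrow> (y ! i) = (\<exists>x\<in>col ` ?L. x ! i)"
        proof (cases R)
          case Binary
          have "(\<Sum>l<k. (of_bool (U i l) * of_bool (V l j) :: nat)) = (\<Sum>l\<in>?L. of_bool (col l ! i))"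
            by (rule sum.mono_neutral_cong_right) (auto simp: colnth[OF i'])
          with e Binary have eq: "(of_bool (y ! i) :: nat) = (\<Sum>l\<in>?L. of_bool (col l ! i))" by simp
          then have "(\<Sum>l\<in>?L. (of_bool (col l ! i) :: nat)) \<le> 1" by (cases "y!i") auto
          from sum_image_01[where f="\<lambda>x. of_bool (x!i)" and h=col, OF _ this] eq
          show ?thesis using Binary by simp
        next
          case Boolean
          then show ?thesis using e by (auto simp: colnth[OF i'])
        qed
      qed
    qed
  qed
qed

lemma factors_iff:
  "is_matrix n M \<Longrightarrow> factors R n M k \<longleftrightarrow> (\<exists>B. B \<subseteq> vecs n \<and> card B \<le> k \<and> spans R B (set M))"
  using factors_from_B B_from_factors by metis

lemma spans_self: "spans R X X"
  unfolding spans_def spans_vec_def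
proof
  fix y assume y: "y \<in> X"
  show "\<exists>S\<subseteq>X. \<forall>i<length y. case R of
            Binary \<Rightarrow> (of_bool (y ! i) :: nat) = (\<Sum>x\<in>S. of_bool (x ! i))
          | Boolean \<Rightarrow> (y ! i) = (\<exists>x\<in>S. x ! i)"
    using y by (intro exI[of _ "{y}"]) (auto split: rank_mode.split)
qed

lemma rank_le:
  assumes "is_matrix n M" "B \<subseteq> vecs n" "spans R B (set M)"
  shows "rank R n M \<le> card B"
  unfolding rank_def using assms factors_iff by (intro Least_le) blast

lemma rank_ex:
  assumes M: "is_matrix n M"
  shows "\<exists>B. B \<subseteq> vecs n \<and> spans R B (set M) \<and> card B = rank R n M"
proof -
  have "set M \<subseteq> vecs n" using M by (auto simp: is_matrix_def vecs_def)
  then have "factors R n M (card (set M))" using factors_iff[OF M] spans_self by blast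
  then have "factors R n M (rank R n M)" unfolding rank_def by (rule LeastI)
  then obtain B where B: "B \<subseteq> vecs n" "card B \<le> rank R n M" "spans R B (set M)"
    using factors_iff[OF M] by blast
  moreover have "rank R n M \<le> card B" using rank_le[OF M B(1,3)] .
  ultimately show ?thesis by (intro exI[of _ B]) auto
qed

lemma base_iff:
  assumes M: "is_matrix n M"
  shows "is_base R n M B \<longleftrightarrow> B \<subseteq> vecs n \<and> spans R B (set M) \<and> card B = rank R n M"
proof -
  obtain B0 where B0: "B0 \<subseteq> vecs n" "spans R B0 (set M)" "card B0 = rank R n M" using rank_ex[OF M] by blast
  show ?thesis unfolding is_base_def
    using B0 rank_le[OF M] by (metis le_antisym)
qed

lemma spans_app: "spans R B (set (M @ N)) \<longleftrightarrow> spans R B (set M) \<and> spans R B (set N)"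
  by (auto simp: spans_def)

lemma rank_mono:
  assumes M: "is_matrix n (M @ N)"
  shows "rank R n M \<le> rank R n (M @ N)"
proof -
  have M': "is_matrix n M" using M by (auto simp: is_matrix_def)
  obtain C where "C \<subseteq> vecs n" "spans R C (set (M @ N))" "card C = rank R n (M @ N)" using rank_ex[OF M] by blast
  then show ?thesis using rank_le[OF M', of C] spans_app by metis
qed

lemma spans_vec_mem: "x \<in> X \<Longrightarrow> spans_vec R X x"
  using spans_self[of R X] by (auto simp: spans_def)

lemma part1:
  assumes A: "is_matrix n A"
    and B: "is_base R n A B" and Ball: "\<forall>B'. is_base R n A B' \<longrightarrow> spans R B B'"
    and xs: "set xs \<subseteq> vecs n" and xk: "\<forall>x\<in>set xs. rank R n (A @ [x]) = rank R n A"
  shows "rank R n (A @ xs) = rank R n A"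
proof -
  have Axs: "is_matrix n (A @ xs)" using A xs by (auto simp: is_matrix_def vecs_def)
  have Bv: "B \<subseteq> vecs n" "spans R B (set A)" "card B = rank R n A" using B base_iff[OF A] by auto
  have "spans R B (set xs)" unfolding spans_def
  proof
    fix x assume x: "x \<in> set xs"
    have Ax: "is_matrix n (A @ [x])" using A xs x by (auto simp: is_matrix_def vecs_def)
    obtain C where C: "C \<subseteq> vecs n" "spans R C (set (A @ [x]))" "card C = rank R n (A @ [x])"
      using rank_ex[OF Ax] by blast
    have "spans R C (set A)" using C(2) spans_app by blast
    moreover have "card C = rank R n A" using C(3) xk x by simp
    ultimately have "is_base R n A C" using C(1) base_iff[OF A] by blast
    then have "spans R B C" using Ball by blast
    moreover have "spans_vec R C x" using C(2) by (auto simp: spans_def)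
    moreover have "length x = n" using x xs by (auto simp: vecs_def)
    ultimately show "spans_vec R B x" using spans_vec_trans[OF Bv(1) C(1)] by blast
  qed
  then have "spans R B (set (A @ xs))" using Bv spans_app by blast
  then have "rank R n (A @ xs) \<le> rank R n A" using rank_le[OF Axs Bv(1)] Bv(3) by simp
  then show ?thesis using rank_mono[OF Axs, of R] by simp
qed

lemma part2:
  assumes A: "is_matrix n A"
    and nb: "\<not> (\<exists>B. is_base R n A B \<and> (\<forall>B'. is_base R n A B' \<longrightarrow> spans R B B'))"
  shows "\<exists>xs. set xs \<subseteq> vecs n \<and> (\<forall>x\<in>set xs. rank R n (A @ [x]) = rank R n A)
                  \<and> rank R n (A @ xs) > rank R n A"
proof -
  let ?V = "\<Union>{B. is_base R n A B}"
  have Vs: "?V \<subseteq> vecs n" by (auto simp: is_base_def)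
  then have "finite ?V" using finite_vecs finite_subset by blast
  from finite_list[OF this] obtain xs where xs: "set xs = ?V" by (elim exE)
  have Axs: "is_matrix n (A @ xs)" using A xs Vs by (auto simp: is_matrix_def vecs_def)
  show ?thesis
  proof (intro exI[of _ xs] conjI ballI)
    show "set xs \<subseteq> vecs n" using xs Vs by simp
    fix x assume x: "x \<in> set xs"
    have Ax: "is_matrix n (A @ [x])" using A xs x Vs by (auto simp: is_matrix_def vecs_def)
    from x xs obtain B' where B': "is_base R n A B'" "x \<in> B'" by auto
    then have Bv: "B' \<subseteq> vecs n" "spans R B' (set A)" "card B' = rank R n A" using base_iff[OF A] by auto
    have "spans R B' (set [x])" using B'(2) spans_vec_mem by (auto simp: spans_def)
    then have "spans R B' (set (A @ [x]))" using Bv spans_app by blast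
    then have "rank R n (A @ [x]) \<le> rank R n A" using rank_le[OF Ax Bv(1)] Bv(3) by simp
    then show "rank R n (A @ [x]) = rank R n A" using rank_mono[OF Ax, of R] by simp
  next
    show "rank R n (A @ xs) > rank R n A"
    proof (rule ccontr)
      assume "\<not> ?thesis"
      then have eq: "rank R n (A @ xs) = rank R n A" using rank_mono[OF Axs, of R] by simp
      obtain C where C: "C \<subseteq> vecs n" "spans R C (set (A @ xs))" "card C = rank R n (A @ xs)"
        using rank_ex[OF Axs] by blast
      have "spans R C (set A)" using C(2) spans_app by blast
      then have "is_base R n A C" using C(1,3) eq base_iff[OF A] by simp
      moreover have "\<forall>B'. is_base R n A B' \<longrightarrow> spans R C B'"
      proof (intro allI impI)
        fix B' assume "is_base R n A B'"
        then have "B' \<subseteq> set xs" using xs by blast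
        then show "spans R C B'" using C(2) unfolding spans_def by auto
      qed
      ultimately show False using nb by blast
    qed
  qed
qed

theorem theorem1:
  fixes R :: rank_mode and n :: nat and A :: "bool list list"
  assumes "is_matrix n A"
  defines "k \<equiv> rank R n A"
  shows "((\<exists>B. is_base R n A B \<and> (\<forall>B'. is_base R n A B' \<longrightarrow> spans R B B')) \<longrightarrow>
            (\<forall>xs. set xs \<subseteq> vecs n \<and> (\<forall>x\<in>set xs. rank R n (A @ [x]) = k)
                  \<longrightarrow> rank R n (A @ xs) = k))
       \<and> ((\<not> (\<exists>B. is_base R n A B \<and> (\<forall>B'. is_base R n A B' \<longrightarrow> spans R B B'))) \<longrightarrow>
            (\<exists>xs. set xs \<subseteq> vecs n \<and> (\<forall>x\<in>set xs. rank R n (A @ [x]) = k)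
                  \<and> rank R n (A @ xs) > k))
       \<and> (augmentation_prop R n A \<longleftrightarrow>
            (\<exists>B. is_base R n A B \<and> (\<forall>B'. is_base R n A B' \<longrightarrow> spans R B B')))"
proof -
  have P1: "((\<exists>B. is_base R n A B \<and> (\<forall>B'. is_base R n A B' \<longrightarrow> spans R B B')) \<longrightarrow>
            (\<forall>xs. set xs \<subseteq> vecs n \<and> (\<forall>x\<in>set xs. rank R n (A @ [x]) = k)
                  \<longrightarrow> rank R n (A @ xs) = k))"
  proof (intro impI allI)
    fix xs assume h: "\<exists>B. is_base R n A B \<and> (\<forall>B'. is_base R n A B' \<longrightarrow> spans R B B')"
      and x: "set xs \<subseteq> vecs n \<and> (\<forall>x\<in>set xs. rank R n (A @ [x]) = k)"
    from h obtain B where "is_base R n A B" "\<forall>B'. is_base R n A B' \<longrightarrow> spans R B B'" by blast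
    from part1[OF assms(1) this] x show "rank R n (A @ xs) = k" unfolding k_def by blast
  qed
  have P2: "((\<not> (\<exists>B. is_base R n A B \<and> (\<forall>B'. is_base R n A B' \<longrightarrow> spans R B B'))) \<longrightarrow>
            (\<exists>xs. set xs \<subseteq> vecs n \<and> (\<forall>x\<in>set xs. rank R n (A @ [x]) = k)
                  \<and> rank R n (A @ xs) > k))"
    using part2[OF assms(1)] unfolding k_def by (intro impI)
  have P3: "augmentation_prop R n A \<longleftrightarrow>
            (\<exists>B. is_base R n A B \<and> (\<forall>B'. is_base R n A B' \<longrightarrow> spans R B B'))"
  proof
    assume au: "augmentation_prop R n A"
    show "\<exists>B. is_base R n A B \<and> (\<forall>B'. is_base R n A B' \<longrightarrow> spans R B B')"
    proof (rule ccontr)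
      assume "\<not> ?thesis"
      with P2 obtain xs where "set xs \<subseteq> vecs n" "\<forall>x\<in>set xs. rank R n (A @ [x]) = k" "rank R n (A @ xs) > k"
        by blast
      with au show False unfolding augmentation_prop_def k_def by auto
    qed
  next
    assume "\<exists>B. is_base R n A B \<and> (\<forall>B'. is_base R n A B' \<longrightarrow> spans R B B')"
    with P1 show "augmentation_prop R n A" unfolding augmentation_prop_def k_def by blast
  qed
  show ?thesis using P1 P2 P3 by (intro conjI)
qed

end
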